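(* For every $\lambda$-term $A$ there is a clean $\lambda$-term $B$ such that $A\twoheadrightarrow_{\alpha'}B$.
   Context: $\lambda$-terms over an infinite variable set $\mathcal V$: $\mathcal M ::= \mathcal V \mid (\lambda\mathcal V.\mathcal M)\mid(\mathcal M\mathcal M)$. $FV(C)$ is the set of variables with a free occurrence in $C$ (occurrences inside the body of $\lambda v.\cdot$, or the $v$ of $\lambda v$, are bound); $BV(C)$ is the set of $v$ such that $\lambda v$ occurs in $C$; $FV(vA)=\{v\}\cup FV(A)$. A term $A$ is clean iff $BV(A)\cap FV(A)=\emptyset$ and for every variable $v$, $\lambda v$ occurs at most once in $A$. Grafting $A\{v:=B\}$: $v\{v:=B\}=B$; $v'\{v:=B\}=v'$ if $v'\neq v$; $(AC)\{v:=B\}=A\{v:=B\}C\{v:=B\}$; $(\lambda v.A)\{v:=B\}=\lambda v.A$; $(\lambda v'.A)\{v:=B\}=\lambda v'.A\{v:=B\}$ if $v\neq v'$. $\to_{\alpha'}$ is the least relation closed under $A\mapsto AC$, $A\mapsto CA$, $A\mapsto\lambda u.A$ (compatible) containing $\lambda v.A\to_{\alpha'}\lambda v'.A\{v:=v'\}$ whenever $v'\notin FV(vA)$ and $v,v'\notin BV(A)$; $\twoheadrightarrow_{\alpha'}$ is its reflexive transitive closure. *)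

theory Defs
  imports Main
begin

datatype 'v lterm = Var 'v | Lam 'v "'v lterm" | App "'v lterm" "'v lterm"

fun FV :: "'v lterm \<Rightarrow> 'v set" where
  "FV (Var x) = {x}"
| "FV (Lam x A) = FV A - {x}"
| "FV (App A B) = FV A \<union> FV B"

fun BV :: "'v lterm \<Rightarrow> 'v set" where
  "BV (Var x) = {}"
| "BV (Lam x A) = insert x (BV A)"
| "BV (App A B) = BV A \<union> BV B"

fun lam_count :: "'v \<Rightarrow> 'v lterm \<Rightarrow> nat" where
  "lam_count v (Var x) = 0"
| "lam_count v (Lam x A) = (if x = v then 1 else 0) + lam_count v A"
| "lam_count v (App A B) = lam_count v A + lam_count v B"

definition clean :: "'v lterm \<Rightarrow> bool" where
  "clean A \<longleftrightarrow> BV A \<inter> FV A = {} \<and> (\<forall>v. lam_count v A \<le> 1)"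

fun graft :: "'v lterm \<Rightarrow> 'v \<Rightarrow> 'v lterm \<Rightarrow> 'v lterm" where
  "graft (Var x) v B = (if x = v then B else Var x)"
| "graft (App A C) v B = App (graft A v B) (graft C v B)"
| "graft (Lam x A) v B = (if x = v then Lam x A else Lam x (graft A v B))"

inductive alpha1 :: "'v lterm \<Rightarrow> 'v lterm \<Rightarrow> bool" where
  rename: "\<lbrakk> v' \<notin> insert v (FV A); v \<notin> BV A; v' \<notin> BV A \<rbrakk>
           \<Longrightarrow> alpha1 (Lam v A) (Lam v' (graft A v (Var v')))"
| appL: "alpha1 A A' \<Longrightarrow> alpha1 (App A C) (App A' C)"
| appR: "alpha1 A A' \<Longrightarrow> alpha1 (App C A) (App C A')"
| lam: "alpha1 A A' \<Longrightarrow> alpha1 (Lam u A) (Lam u A')"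

definition alpha_star :: "'v lterm \<Rightarrow> 'v lterm \<Rightarrow> bool" where
  "alpha_star = alpha1\<^sup>*\<^sup>*"

end

theory Submission
  imports Defs
begin

lemma fin_FV: "finite (FV A)" by (induct A) auto
lemma fin_BV: "finite (BV A)" by (induct A) auto

lemma BV_graft: "BV (graft B v (Var w)) = BV B" by (induct B) auto
lemma lc_graft: "lam_count u (graft B v (Var w)) = lam_count u B" by (induct B) auto
lemma lc_zero: "u \<notin> BV B \<Longrightarrow> lam_count u B = 0" by (induct B) auto
lemma FV_graft: "v \<notin> BV B \<Longrightarrow> w \<notin> BV B \<Longrightarrow>
  FV (graft B v (Var w)) = (FV B - {v}) \<union> (if v \<in> FV B then {w} else {})"
  by (induct B) auto

lemma star_lam: "alpha_star A A' \<Longrightarrow> alpha_star (Lam u A) (Lam u A')"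
  unfolding alpha_star_def
  by (induct rule: rtranclp_induct) (auto intro: rtranclp.rtrancl_into_rtrancl alpha1.lam)
lemma star_appL: "alpha_star A A' \<Longrightarrow> alpha_star (App A C) (App A' C)"
  unfolding alpha_star_def
  by (induct rule: rtranclp_induct) (auto intro: rtranclp.rtrancl_into_rtrancl alpha1.appL)
lemma star_appR: "alpha_star A A' \<Longrightarrow> alpha_star (App C A) (App C A')"
  unfolding alpha_star_def
  by (induct rule: rtranclp_induct) (auto intro: rtranclp.rtrancl_into_rtrancl alpha1.appR)

lemma main:
  fixes A :: "'v lterm"
  assumes inf: "infinite (UNIV :: 'v set)"
  shows "finite S \<Longrightarrow> \<exists>B. clean B \<and> alpha_star A B \<and> FV B = FV A \<and> BV B \<inter> S = {}"
proof (induct A arbitrary: S)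
  case (Var x)
  show ?case by (rule exI[of _ "Var x"]) (auto simp: clean_def alpha_star_def)
next
  case (Lam v A)
  obtain B where B: "clean B" "alpha_star A B" "FV B = FV A" "BV B \<inter> insert v S = {}"
    using Lam(1)[of "insert v S"] Lam(2) by auto
  have "finite (insert v S \<union> FV B \<union> BV B)" using Lam(2) fin_FV fin_BV by auto
  from ex_new_if_finite[OF inf this] obtain w where w: "w \<notin> insert v S \<union> FV B \<union> BV B"
    by blast
  have vB: "v \<notin> BV B" using B(4) by auto
  have wB: "w \<notin> BV B" using w by auto
  have step: "alpha1 (Lam v B) (Lam w (graft B v (Var w)))"
    by (rule alpha1.rename) (use w vB in auto)
  have st: "alpha_star (Lam v A) (Lam w (graft B v (Var w)))"
    using rtranclp.rtrancl_into_rtrancl[OF star_lam[OF B(2), of v, unfolded alpha_star_def] step]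
    unfolding alpha_star_def .
  have fv: "FV (Lam w (graft B v (Var w))) = FV (Lam v A)"
    using FV_graft[OF vB wB] B(3) w by auto
  have cl: "clean (Lam w (graft B v (Var w)))"
  proof -
    have c1: "BV B \<inter> FV B = {}" and c2: "\<And>u. lam_count u B \<le> 1" using B(1) unfolding clean_def by auto
    have "BV (Lam w (graft B v (Var w))) \<inter> FV (Lam w (graft B v (Var w))) = {}"
    proof -
      have "FV (graft B v (Var w)) \<subseteq> insert w (FV B)" using FV_graft[OF vB wB] by auto
      then show ?thesis using c1 w by (auto simp: BV_graft)
    qed
    moreover have "lam_count u (Lam w (graft B v (Var w))) \<le> 1" for u
      using c2[of u] lc_zero[OF wB] by (cases "w = u") (simp_all add: lc_graft)
    ultimately show ?thesis unfolding clean_def by blast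
  qed
  have bvS: "BV (Lam w (graft B v (Var w))) \<inter> S = {}" using B(4) w by (auto simp: BV_graft)
  show ?case using st fv cl bvS by blast
next
  case (App A1 A2)
  obtain B1 where B1: "clean B1" "alpha_star A1 B1" "FV B1 = FV A1" "BV B1 \<inter> (S \<union> FV A2) = {}"
    using App(1)[of "S \<union> FV A2"] App(3) fin_FV by auto
  obtain B2 where B2: "clean B2" "alpha_star A2 B2" "FV B2 = FV A2" "BV B2 \<inter> (S \<union> FV A1 \<union> BV B1) = {}"
    using App(2)[of "S \<union> FV A1 \<union> BV B1"] App(3) fin_FV fin_BV by auto
  have st: "alpha_star (App A1 A2) (App B1 B2)"
    using star_appL[OF B1(2), of A2] star_appR[OF B2(2), of B1]
    unfolding alpha_star_def by (rule rtranclp_trans)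
  have lc: "lam_count u (App B1 B2) \<le> 1" for u
  proof (cases "u \<in> BV B1")
    case True
    then have "u \<notin> BV B2" using B2(4) by auto
    then show ?thesis using lc_zero[of u B2] B1(1) unfolding clean_def by auto
  next
    case False
    then show ?thesis using lc_zero[of u B1] B2(1) unfolding clean_def by auto
  qed
  have "BV (App B1 B2) \<inter> FV (App B1 B2) = {}"
    using B1(1,3,4) B2(1,3,4) unfolding clean_def by auto
  then have cl: "clean (App B1 B2)"
    using lc unfolding clean_def by blast
  have fv: "FV (App B1 B2) = FV (App A1 A2)" using B1(3) B2(3) by simp
  have bvS: "BV (App B1 B2) \<inter> S = {}" using B1(4) B2(4) by auto
  show ?case using st cl fv bvS by blast
qed

theorem lemma5p5:
  fixes A :: "'v lterm"
  assumes "infinite (UNIV :: 'v set)"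
  shows "\<exists>B. clean B \<and> alpha_star A B"
  using main[OF assms, of "{}" A] by auto

end
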